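(* Let $0<i<n$. Then the inclusion $\boldsymbol\Lambda^n_i\cup\Delta^n\hookrightarrow\boldsymbol\Delta^n$ is an inner $n$-expansion.
   Context: The thick simplex $\boldsymbol\Delta^n$ is the simplicial set whose $m$-simplices are all functions $\{0,\dots,m\}\to\{0,\dots,n\}$ (the nerve of the groupoid on $\{0,..,n\}$ with one morphism between any two objects); $\Delta^n\subset\boldsymbol\Delta^n$ is the simplicial subset of monotone functions. The thick horn $\boldsymbol\Lambda^n_i\subset\boldsymbol\Delta^n$ is the union, over $j\ne i$, of the simplicial subsets consisting of functions whose image avoids $j$ (equivalently $\Lambda^n_i\times_\Delta\boldsymbol\Delta$, the coend $\int^{p}(\Lambda^n_i)_p\times\boldsymbol\Delta^p$). $\Lambda^p_i=\bigcup_{j\ne i}\partial_j\Delta^p$. For $m>0$, an inclusion $S\hookrightarrow T$ is an inner $m$-expansion if there is a filtration $S=F_{-1}T\subset F_0T\subset\cdots$ with $T=\bigcup_\ell F_\ell T$, a weakly monotone sequence $n_\ell\ge m$, indices $0<i_\ell<n_\ell$, and maps $x_\ell:\Delta^{n_\ell}\to F_\ell T$, $y_\ell:\Lambda^{n_\ell}_{i_\ell}\to F_{\ell-1}T$ making $F_\ell T$ the pushout of $F_{\ell-1}T\leftarrow\Lambda^{n_\ell}_{i_\ell}\hookrightarrow\Delta^{n_\ell}$. *)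

theory Defs
  imports Main "HOL-Library.Extended_Nat"
begin

(* An m-simplex of the thick simplex (thick N), i.e. a function {0..m} -> {0..N},
   is represented by the list [s 0, ..., s m] (length m+1, entries <= N). *)
definition thick :: "nat \<Rightarrow> nat list set" where
  "thick N = {s. s \<noteq> [] \<and> set s \<subseteq> {0..N}}"

(* simplicial operator: precomposition of s : [m] -> [N] with a monotone
   theta : [k] -> [m], theta given as a nonempty sorted list of indices < length s *)
definition valid_op :: "nat list \<Rightarrow> nat list \<Rightarrow> bool" where
  "valid_op s \<theta> \<longleftrightarrow> \<theta> \<noteq> [] \<and> sorted \<theta> \<and> (\<forall>j\<in>set \<theta>. j < length s)"

definition act :: "nat list \<Rightarrow> nat list \<Rightarrow> nat list" where
  "act s \<theta> = map (\<lambda>j. s ! j) \<theta>"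

definition ssubset :: "nat \<Rightarrow> nat list set \<Rightarrow> bool" where
  "ssubset N X \<longleftrightarrow> X \<subseteq> thick N \<and> (\<forall>s\<in>X. \<forall>\<theta>. valid_op s \<theta> \<longrightarrow> act s \<theta> \<in> X)"

definition simplex :: "nat \<Rightarrow> nat list set" where
  "simplex p = {s \<in> thick p. sorted s}"

definition face :: "nat \<Rightarrow> nat \<Rightarrow> nat list set" where
  "face p j = {s \<in> simplex p. j \<notin> set s}"

definition horn :: "nat \<Rightarrow> nat \<Rightarrow> nat list set" where
  "horn p i = (\<Union>j\<in>{0..p} - {i}. face p j)"

definition thick_horn :: "nat \<Rightarrow> nat \<Rightarrow> nat list set" where
  "thick_horn N i = (\<Union>j\<in>{0..N} - {i}. {s \<in> thick N. j \<notin> set s})"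

definition smap :: "nat list set \<Rightarrow> nat list set \<Rightarrow> (nat list \<Rightarrow> nat list) \<Rightarrow> bool" where
  "smap X Y f \<longleftrightarrow> (\<forall>s\<in>X. f s \<in> Y \<and> length (f s) = length s \<and>
      (\<forall>\<theta>. valid_op s \<theta> \<longrightarrow> f (act s \<theta>) = act (f s) \<theta>))"

(* D is the pushout of  A <-y- C >-> B  (C \<subseteq> B the inclusion), with legs the inclusion
   A \<subseteq> D and x : B -> D.  Pushouts of simplicial sets are computed degreewise, and
   a commutative square of sets along an injection C >-> B is a pushout iff
   A -> D is injective (here an inclusion), x is injective on B - C, x(B - C) is disjoint
   from A, and A \<union> x(B) = D. *)
definition pushout_incl ::
  "nat list set \<Rightarrow> nat list set \<Rightarrow> nat list set \<Rightarrow> nat list set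
   \<Rightarrow> (nat list \<Rightarrow> nat list) \<Rightarrow> (nat list \<Rightarrow> nat list) \<Rightarrow> bool" where
  "pushout_incl A C B D y x \<longleftrightarrow>
     C \<subseteq> B \<and> A \<subseteq> D \<and> (\<forall>c\<in>C. x c = y c) \<and>
     D = A \<union> x ` B \<and> inj_on x (B - C) \<and> x ` (B - C) \<inter> A = {}"

(* S >-> T (simplicial subsets of thick N) is an inner m-expansion.
   Index shift: F 0 = F_{-1}T = S, F (l+1) = F_l T;  the filtration has L steps,
   L finite or infinite. *)
definition inner_expansion :: "nat \<Rightarrow> nat \<Rightarrow> nat list set \<Rightarrow> nat list set \<Rightarrow> bool" where
  "inner_expansion N m S T \<longleftrightarrow> 0 < m \<and> ssubset N S \<and> ssubset N T \<and> S \<subseteq> T \<and>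
    (\<exists>(L::enat) (F::nat \<Rightarrow> nat list set) (ns::nat \<Rightarrow> nat) (is::nat \<Rightarrow> nat)
        (xs::nat \<Rightarrow> nat list \<Rightarrow> nat list) (ys::nat \<Rightarrow> nat list \<Rightarrow> nat list).
       F 0 = S \<and>
       T = (\<Union>k\<in>{k. enat k \<le> L}. F k) \<and>
       (\<forall>k. enat k \<le> L \<longrightarrow> ssubset N (F k) \<and> F k \<subseteq> T) \<and>
       (\<forall>l. enat l < L \<longrightarrow>
          m \<le> ns l \<and> 0 < is l \<and> is l < ns l \<and>
          (enat (Suc l) < L \<longrightarrow> ns l \<le> ns (Suc l)) \<and>
          smap (simplex (ns l)) (F (Suc l)) (xs l) \<and>
          smap (horn (ns l) (is l)) (F l) (ys l) \<and>
          pushout_incl (F l) (horn (ns l) (is l)) (simplex (ns l)) (F (Suc l)) (ys l) (xs l)))"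

end

theory Submission
  imports Defs "HOL-Library.Sublist" "HOL-Library.Infinite_Set"
begin


fun dl :: "nat \<Rightarrow> 'a list \<Rightarrow> 'a list" where
  "dl _ [] = []"
| "dl 0 (x # xs) = xs"
| "dl (Suc j) (x # xs) = x # dl j xs"

lemma dl_conv: "dl j xs = take j xs @ drop (Suc j) xs"
  by (induction j xs rule: dl.induct) auto

lemma length_dl[simp]: "j < length xs \<Longrightarrow> length (dl j xs) = length xs - 1"
  by (induction j xs rule: dl.induct) auto

lemma nth_dl: "j < length xs \<Longrightarrow> i < length xs - 1 \<Longrightarrow>
   dl j xs ! i = (if i < j then xs ! i else xs ! Suc i)"
  unfolding dl_conv by (auto simp: nth_append min_def)

lemma count_dl: "j < length xs \<Longrightarrow>
   count_list (dl j xs) a = count_list xs a - (if xs ! j = a then 1 else 0)"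
proof (induction j xs rule: dl.induct)
  case (2 x xs) then show ?case by auto
next
  case (3 j x xs)
  have "0 < count_list xs (xs ! j)" using 3(2) nth_mem[of j xs] count_list_0_iff[of xs "xs!j"] by auto
  then show ?case using 3 by (cases "xs ! j = a") auto
qed auto

fun nd :: "nat list \<Rightarrow> bool" where
  "nd (a # b # r) = (a \<noteq> b \<and> nd (b # r))"
| "nd _ = True"

lemma nd_nth: "nd w \<longleftrightarrow> (\<forall>i. Suc i < length w \<longrightarrow> w ! i \<noteq> w ! Suc i)"
proof (induction w rule: nd.induct)
  case (1 a b r)
  show ?case
  proof
    assume A: "nd (a # b # r)"
    show "\<forall>i. Suc i < length (a # b # r) \<longrightarrow> (a # b # r) ! i \<noteq> (a # b # r) ! Suc i"
    proof (intro allI impI)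
      fix i assume "Suc i < length (a # b # r)"
      then show "(a # b # r) ! i \<noteq> (a # b # r) ! Suc i"
        using A 1 by (cases i) auto
    qed
  next
    assume A: "\<forall>i. Suc i < length (a # b # r) \<longrightarrow> (a # b # r) ! i \<noteq> (a # b # r) ! Suc i"
    have "a \<noteq> b" using A[rule_format, of 0] by simp
    moreover have "nd (b # r)" using 1 A[rule_format, of "Suc _"] by auto
    ultimately show "nd (a # b # r)" by simp
  qed
qed auto

lemma nd_remdups_adj: "nd (remdups_adj w)"
  unfolding nd_nth using remdups_adj_adjacent by blast

lemma nd_remdups_adj_id: "nd w \<Longrightarrow> remdups_adj w = w"
  by (induction w rule: nd.induct) auto

lemma nd_dl_ne: assumes "nd t" "j < length t" "k < length t" "j \<noteq> k"
  shows "dl j t \<noteq> dl k t"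
proof -
  { fix j k assume jk: "j < k" "k < length t"
    have "dl j t ! j = t ! Suc j" using jk by (simp add: nth_dl)
    moreover have "dl k t ! j = t ! j" using jk by (simp add: nth_dl)
    moreover have "t ! j \<noteq> t ! Suc j" using assms(1) jk unfolding nd_nth by auto
    ultimately have "dl j t \<noteq> dl k t" by auto }
  then show ?thesis using assms by (metis linorder_neqE_nat)
qed

definition R :: "nat \<Rightarrow> nat \<Rightarrow> nat \<Rightarrow> bool" where
  "R h a b \<longleftrightarrow> a \<noteq> b \<and> a \<noteq> h \<and> b \<noteq> h \<and> \<not> (b = Suc a \<and> b < h)"

fun tg :: "nat \<Rightarrow> nat list \<Rightarrow> nat list option" where
  "tg h (a # b # r) = (if R h a b then Some (a # h # b # r)
      else if b = h \<and> r \<noteq> [] \<and> R h a (hd r) then Some (a # r)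
      else map_option (Cons a) (tg h (b # r)))"
| "tg h _ = None"

lemma tg_hd: "tg h w = Some w' \<Longrightarrow> \<exists>a b r c u. w = a # b # r \<and> w' = a # c # u"
  by (induction h w arbitrary: w' rule: tg.induct) (auto split: if_splits simp: neq_Nil_conv)

lemma tg_Rh: "\<not> R h h x" by (simp add: R_def)

lemma tg_invol: "tg h w = Some w' \<Longrightarrow> tg h w' = Some w"
proof (induction h w arbitrary: w' rule: tg.induct)
  case (1 h a b r)
  show ?case
  proof (cases "R h a b")
    case True
    then show ?thesis using 1(2) by (auto simp: R_def)
  next
    case F1: False
    show ?thesis
    proof (cases "b = h \<and> r \<noteq> [] \<and> R h a (hd r)")
      case True
      then obtain c r' where r: "r = c # r'" by (cases r) auto
      then show ?thesis using 1(2) True F1 by auto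
    next
      case F2: False
      then obtain u where u: "tg h (b # r) = Some u" "w' = a # u" using 1(2) F1 by auto
      have IH: "tg h u = Some (b # r)" using 1(1)[OF F1 F2 u(1)] .
      obtain b' c u2 where u2: "u = b' # c # u2" using tg_hd[OF u(1)] by blast
      have bb: "b' = b" using tg_hd[OF u(1)] u2 by auto
      have c2: "\<not> (b = h \<and> (c # u2) \<noteq> [] \<and> R h a (hd (c # u2)))"
      proof
        assume A: "b = h \<and> (c # u2) \<noteq> [] \<and> R h a (hd (c # u2))"
        then have bh: "b = h" by simp
        obtain c0 r' where r: "r = c0 # r'" using u(1) bh by (cases r) auto
        have "tg h (b # r) = map_option (Cons h) (tg h (c0 # r'))"
          using r bh by (simp add: tg_Rh)
        then obtain v where "tg h (c0 # r') = Some v" "u = h # v" using u(1) by (cases "tg h (c0 # r')") auto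
        then have "c = c0" using tg_hd[of h "c0 # r'" v] u2 by auto
        then show False using F2 A r by auto
      qed
      have e: "tg h (a # u) = map_option (Cons a) (tg h u)"
        unfolding u2 bb tg.simps(1)[of h a b "c#u2"] using F1 c2 by auto
      show ?thesis using e IH u(2) by simp
    qed
  qed
qed auto

lemma tg_len: "tg h w = Some w' \<Longrightarrow> length w' = Suc (length w) \<or> Suc (length w') = length w"
  by (induction h w arbitrary: w' rule: tg.induct) (auto split: if_splits simp: neq_Nil_conv)

lemma tg_top: "tg h w = Some w' \<Longrightarrow> length w' < length w \<Longrightarrow>
  \<exists>k. 0 < k \<and> Suc k < length w \<and> w ! k = h \<and> w' = dl k w \<and> R h (w ! (k - 1)) (w ! Suc k)"
proof (induction h w arbitrary: w' rule: tg.induct)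
  case (1 h a b r)
  show ?case
  proof (cases "R h a b")
    case True then show ?thesis using 1 by auto
  next
    case F1: False
    show ?thesis
    proof (cases "b = h \<and> r \<noteq> [] \<and> R h a (hd r)")
      case True
      then obtain c r' where r: "r = c # r'" by (cases r) auto
      show ?thesis using 1(2) True F1 r by (intro exI[of _ 1]) auto
    next
      case F2: False
      then obtain u where u: "tg h (b # r) = Some u" "w' = a # u" using 1(2) F1 by auto
      have "length u < length (b # r)" using u 1(3) by simp
      from 1(1)[OF F1 F2 u(1) this] obtain k where k: "0 < k" "Suc k < length (b # r)"
        "(b # r) ! k = h" "u = dl k (b # r)" "R h ((b # r) ! (k - 1)) ((b # r) ! Suc k)" by blast
      show ?thesis using k u(2) by (intro exI[of _ "Suc k"]) (auto simp: nth_Cons')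
    qed
  qed
qed auto

lemma tg_nd: "tg h w = Some w' \<Longrightarrow> nd w \<Longrightarrow> nd w'"
proof (induction h w arbitrary: w' rule: tg.induct)
  case (1 h a b r)
  show ?case
  proof (cases "R h a b")
    case True then show ?thesis using 1 by (auto simp: R_def)
  next
    case F1: False
    show ?thesis
    proof (cases "b = h \<and> r \<noteq> [] \<and> R h a (hd r)")
      case True
      then obtain c r' where r: "r = c # r'" by (cases r) auto
      show ?thesis using 1(2,3) True F1 r by (auto simp: R_def)
    next
      case F2: False
      then obtain u where u: "tg h (b # r) = Some u" "w' = a # u" using 1(2) F1 by auto
      have "nd u" using 1(1)[OF F1 F2 u(1)] 1(3) by simp
      moreover obtain c u2 where "u = b # c # u2" using tg_hd[OF u(1)] by auto
      ultimately show ?thesis using u(2) 1(3) by auto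
    qed
  qed
qed auto

lemma tg_set: "tg h w = Some w' \<Longrightarrow> insert h (set w') = insert h (set w)"
  by (induction h w arbitrary: w' rule: tg.induct) (auto split: if_splits simp: neq_Nil_conv)

lemma tg_none: "tg h w = None \<Longrightarrow> nd w \<Longrightarrow> Suc h \<in> set w \<Longrightarrow> set w \<subseteq> {h, Suc h}"
proof (induction h w rule: tg.induct)
  case (1 h a b r)
  have F1: "\<not> R h a b" using 1(2) by (auto split: if_splits)
  have F2: "\<not> (b = h \<and> r \<noteq> [] \<and> R h a (hd r))" using 1(2) F1 by (auto split: if_splits)
  have N: "tg h (b # r) = None" using 1(2) F1 F2 by auto
  have ab: "a \<noteq> b" "nd (b # r)" using 1(3) by auto
  show ?case
  proof (cases "Suc h \<in> set (b # r)")
    case True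
    then have S: "set (b # r) \<subseteq> {h, Suc h}" using 1(1)[OF F1 F2 N ab(2)] by blast
    have "a \<in> {h, Suc h}"
    proof (rule ccontr)
      assume na: "a \<notin> {h, Suc h}"
      show False
      proof (cases "b = h")
        case False
        then have "b = Suc h" using S by auto
        then show False using F1 na by (auto simp: R_def)
      next
        case True
        then obtain c r' where r: "r = c # r'" using \<open>Suc h \<in> set (b # r)\<close> by (cases r) auto
        have "c \<noteq> h" using 1(3) r True by auto
        then have "c = Suc h" using S r by auto
        then show False using F2 na True r by (auto simp: R_def)
      qed
    qed
    then show ?thesis using S by auto
  next
    case False
    then have a: "a = Suc h" using 1(4) by auto
    have bh: "b = h"
    proof (rule ccontr)
      assume "b \<noteq> h" then show False using F1 a False by (auto simp: R_def)
    qed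
    have "r = []"
    proof (rule ccontr)
      assume "r \<noteq> []"
      then obtain c r' where r: "r = c # r'" by (cases r) auto
      have "c \<noteq> h" using 1(3) r bh by auto
      then show False using F2 a bh r False by (auto simp: R_def)
    qed
    then show ?thesis using a bh by auto
  qed
qed auto

lemma tg_KL: "tg h t = Some t' \<Longrightarrow> nd t \<Longrightarrow> length t' < length t \<Longrightarrow> j < length t \<Longrightarrow>
   t ! j = h \<Longrightarrow> dl j t \<noteq> t' \<Longrightarrow> \<exists>t''. tg h (dl j t) = Some t'' \<and> length t'' < length (dl j t)"
proof (induction h t arbitrary: t' j rule: tg.induct)
  case (1 h a b r)
  show ?case
  proof (cases "R h a b")
    case True then show ?thesis using 1 by auto
  next
    case F1: False
    show ?thesis
    proof (cases "b = h \<and> r \<noteq> [] \<and> R h a (hd r)")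
      case True
      then obtain c r' where r: "r = c # r'" by (cases r) auto
      have t': "t' = a # r" using 1(2) True F1 by auto
      have ah: "a \<noteq> h" "c \<noteq> h" using True r by (auto simp: R_def)
      have "j \<noteq> 0" using 1(6) ah(1) by (cases j) auto
      moreover have "j \<noteq> 1" using 1(7) t' r by auto
      moreover have "j \<noteq> 2" using 1(6) ah(2) r by (auto simp: numeral_2_eq_2)
      ultimately obtain j' where j: "j = Suc (Suc (Suc j'))" by (metis One_nat_def Suc_1 not0_implies_Suc)
      have "dl j (a # b # r) = a # h # c # dl j' r'" using j r True by simp
      moreover have "tg h (a # h # c # dl j' r') = Some (a # c # dl j' r')"
        using True r by (simp add: tg_Rh R_def)
      ultimately show ?thesis by simp
    next
      case F2: False
      then obtain u where u: "tg h (b # r) = Some u" "t' = a # u" using 1(2) F1 by auto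
      have ul: "length u < length (b # r)" using u 1(4) by simp
      show ?thesis
      proof (cases j)
        case 0 then show ?thesis using u ul by simp
      next
        case (Suc j')
        show ?thesis
        proof (cases j')
          case 0
          then have bh: "b = h" using Suc 1(6) by simp
          obtain c r' where r: "r = c # r'" using u(1) bh by (cases r) (auto simp: tg_Rh)
          have ch: "c \<noteq> h" "a \<noteq> h" using 1(3) r bh by auto
          have nR: "\<not> R h a c" using F2 bh r by auto
          have "tg h (b # r) = map_option (Cons h) (tg h (c # r'))" using bh r ch by (simp add: tg_Rh)
          then obtain v where v: "tg h (c # r') = Some v" "u = h # v" using u(1) by (cases "tg h (c # r')") auto
          have "tg h (a # c # r') = map_option (Cons a) (tg h (c # r'))" using nR ch by simp
          then show ?thesis using v ul Suc 0 r by simp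
        next
          case (Suc j'')
          have IH: "\<exists>t''. tg h (dl j' (b # r)) = Some t'' \<and> length t'' < length (dl j' (b # r))"
            using 1(1)[OF F1 F2 u(1)] 1(3,5,6,7) ul u(2) \<open>j = Suc j'\<close> by auto
          have jr: "j'' < length r" using 1(5) \<open>j = Suc j'\<close> Suc by simp
          have dj: "dl j' (b # r) = b # dl j'' r" using Suc by simp
          have c2: "\<not> (b = h \<and> dl j'' r \<noteq> [] \<and> R h a (hd (dl j'' r)))"
          proof
            assume A: "b = h \<and> dl j'' r \<noteq> [] \<and> R h a (hd (dl j'' r))"
            show False
            proof (cases j'')
              case 0
              then have "r ! 0 = h" using 1(6) \<open>j = Suc j'\<close> Suc by simp
              then show False using 1(3) A jr 0 by (cases r) auto
            next
              case (Suc j3)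
              then obtain c r' where "r = c # r'" using jr by (cases r) auto
              then show False using A F2 Suc by auto
            qed
          qed
          have "tg h (a # b # dl j'' r) = map_option (Cons a) (tg h (b # dl j'' r))"
            using F1 c2 by (subst tg.simps(1)) auto
          then show ?thesis using IH dj \<open>j = Suc j'\<close> by auto
        qed
      qed
    qed
  qed
qed auto

lemma tg_sorted: assumes "m < h" "h < n"
  shows "tg h ([m..<h] @ [Suc h..<Suc n]) = Some [m..<Suc n]"
  using assms(1)
proof (induction "h - m" arbitrary: m)
  case 0 then show ?case by simp
next
  case (Suc d)
  show ?case
  proof (cases "Suc m = h")
    case True
    have e1: "[m..<h] @ [Suc h..<Suc n] = m # Suc h # [Suc (Suc h)..<Suc n]"
      using True assms(2) by (simp add: upt_rec)
    have e2: "[m..<Suc n] = m # h # Suc h # [Suc (Suc h)..<Suc n]"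
      using True assms(2) by (simp add: upt_rec)
    have "R h m (Suc h)" using True by (auto simp: R_def)
    then show ?thesis unfolding e1 e2 by simp
  next
    case False
    then have sm: "Suc m < h" using Suc(3) by simp
    have IH: "tg h ([Suc m..<h] @ [Suc h..<Suc n]) = Some [Suc m..<Suc n]"
      using Suc(1)[of "Suc m"] Suc(2) sm by simp
    have e1: "[m..<h] @ [Suc h..<Suc n] = m # Suc m # ([Suc (Suc m)..<h] @ [Suc h..<Suc n])"
      using sm by (simp add: upt_rec)
    have e3: "[Suc m..<h] @ [Suc h..<Suc n] = Suc m # ([Suc (Suc m)..<h] @ [Suc h..<Suc n])"
      using sm by (simp add: upt_rec)
    have nR: "\<not> R h m (Suc m)" using sm by (auto simp: R_def)
    have "tg h (m # Suc m # ([Suc (Suc m)..<h] @ [Suc h..<Suc n]))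
       = map_option (Cons m) (tg h (Suc m # ([Suc (Suc m)..<h] @ [Suc h..<Suc n])))"
      using nR sm by (subst tg.simps(1)) auto
    also have "\<dots> = Some (m # [Suc m..<Suc n])" using IH e3 by simp
    finally show ?thesis using e1 assms(2) sm by (simp add: upt_rec)
  qed
qed



definition down :: "nat list \<Rightarrow> nat list set" where
  "down t = act t ` simplex (length t - 1)"

lemma valid_iff: "t \<noteq> [] \<Longrightarrow> valid_op t \<theta> \<longleftrightarrow> \<theta> \<in> simplex (length t - 1)"
  unfolding valid_op_def simplex_def thick_def by (cases t) (auto simp: less_Suc_eq_le)

lemma down_iff: "g \<noteq> [] \<Longrightarrow> w \<in> down g \<longleftrightarrow> (\<exists>\<theta>. valid_op g \<theta> \<and> w = act g \<theta>)"
  unfolding down_def using valid_iff by blast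

lemma valid_ne: "valid_op g \<theta> \<Longrightarrow> g \<noteq> []"
  unfolding valid_op_def by (cases \<theta>) auto

lemma down_I: "valid_op g \<theta> \<Longrightarrow> w = act g \<theta> \<Longrightarrow> w \<in> down g"
  using down_iff valid_ne by blast

lemma act_act: "valid_op s \<theta> \<Longrightarrow> act (act t s) \<theta> = act t (act s \<theta>)"
  unfolding act_def valid_op_def by auto

lemma valid_comp: "valid_op t s \<Longrightarrow> valid_op s \<theta> \<Longrightarrow> valid_op t (act s \<theta>)"
  unfolding valid_op_def act_def
  by (auto simp: sorted_iff_nth_mono)

lemma act_ne: "valid_op t \<theta> \<Longrightarrow> act t \<theta> \<noteq> []"
  unfolding valid_op_def act_def by auto

lemma length_act[simp]: "length (act t \<theta>) = length \<theta>"
  unfolding act_def by simp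

lemma set_act: "valid_op t \<theta> \<Longrightarrow> set (act t \<theta>) \<subseteq> set t"
  unfolding valid_op_def act_def by auto

lemma down_trans: "w \<in> down g \<Longrightarrow> g \<in> down g' \<Longrightarrow> g' \<noteq> [] \<Longrightarrow> w \<in> down g'"
proof -
  assume a: "w \<in> down g" "g \<in> down g'" "g' \<noteq> []"
  then obtain s where s: "valid_op g' s" "g = act g' s" using down_iff by blast
  then have "g \<noteq> []" using act_ne[OF s(1)] s(2) by simp
  then obtain \<theta> where th: "valid_op g \<theta>" "w = act g \<theta>" using a down_iff by blast
  have "valid_op s \<theta>" using th(1) s(2) unfolding valid_op_def by simp
  then show ?thesis using s th a(3) down_iff valid_comp act_act by metis
qed

lemma down_self: "g \<noteq> [] \<Longrightarrow> g \<in> down g"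
proof -
  assume g: "g \<noteq> []"
  have "valid_op g [0..<length g]" using g unfolding valid_op_def by auto
  moreover have "act g [0..<length g] = g" unfolding act_def by (simp add: map_nth)
  ultimately show ?thesis using g down_iff by metis
qed

lemma ssubset_closed: "ssubset N X \<Longrightarrow> g \<in> X \<Longrightarrow> w \<in> down g \<Longrightarrow> w \<in> X"
proof -
  assume a: "ssubset N X" "g \<in> X" "w \<in> down g"
  then have "g \<noteq> []" unfolding ssubset_def thick_def by auto
  then obtain \<theta> where "valid_op g \<theta>" "w = act g \<theta>" using a(3) down_iff by blast
  then show ?thesis using a(1,2) unfolding ssubset_def by blast
qed

lemma down_thick: "g \<in> thick N \<Longrightarrow> down g \<subseteq> thick N"
proof
  fix w assume a: "g \<in> thick N" "w \<in> down g"
  then have "g \<noteq> []" unfolding thick_def by auto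
  then obtain \<theta> where th: "valid_op g \<theta>" "w = act g \<theta>" using a(2) down_iff by blast
  show "w \<in> thick N" using act_ne[OF th(1)] set_act[OF th(1)] a(1) th(2) unfolding thick_def by auto
qed

lemma ssubset_down: "g \<in> thick N \<Longrightarrow> ssubset N (down g)"
proof -
  assume g: "g \<in> thick N"
  then have ne: "g \<noteq> []" unfolding thick_def by auto
  show ?thesis unfolding ssubset_def
  proof (intro conjI ballI allI impI)
    show "down g \<subseteq> thick N" using down_thick[OF g] .
  next
    fix s \<theta> assume s: "s \<in> down g" and th: "valid_op s \<theta>"
    then have "s \<noteq> []" unfolding valid_op_def by auto
    then have "act s \<theta> \<in> down s" using down_iff th by blast
    then show "act s \<theta> \<in> down g" using down_trans s ne by blast
  qed
qed

lemma ssubset_Un: "ssubset N A \<Longrightarrow> ssubset N B \<Longrightarrow> ssubset N (A \<union> B)"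
  unfolding ssubset_def by blast

lemma ssubset_UN: "(\<And>i. i \<in> I \<Longrightarrow> ssubset N (A i)) \<Longrightarrow> ssubset N (\<Union>i\<in>I. A i)"
  unfolding ssubset_def by blast

lemma ssubset_empty: "ssubset N {}"
  unfolding ssubset_def by blast

lemma ssubset_S: "ssubset n (thick_horn n h \<union> simplex n)"
proof (rule ssubset_Un)
  show "ssubset n (thick_horn n h)" unfolding ssubset_def thick_horn_def
  proof (intro conjI ballI allI impI)
    fix s \<theta> assume s: "s \<in> (\<Union>j\<in>{0..n} - {h}. {s \<in> thick n. j \<notin> set s})" and th: "valid_op s \<theta>"
    from s obtain j where j: "j \<in> {0..n} - {h}" "s \<in> thick n" "j \<notin> set s" by blast
    have "act s \<theta> \<in> thick n" using j(2) act_ne[OF th] set_act[OF th] unfolding thick_def by auto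
    moreover have "j \<notin> set (act s \<theta>)" using set_act[OF th] j(3) by auto
    ultimately show "act s \<theta> \<in> (\<Union>j\<in>{0..n} - {h}. {s \<in> thick n. j \<notin> set s})" using j(1) by auto
  qed auto
next
  show "ssubset n (simplex n)" unfolding ssubset_def simplex_def
  proof (intro conjI ballI allI impI)
    fix s \<theta> assume s: "s \<in> {s \<in> thick n. sorted s}" and th: "valid_op s \<theta>"
    have "act s \<theta> \<in> thick n" using s act_ne[OF th] set_act[OF th] unfolding thick_def by auto
    moreover have "sorted (act s \<theta>)" using s th unfolding valid_op_def act_def
      by (auto simp: sorted_iff_nth_mono)
    ultimately show "act s \<theta> \<in> {s \<in> thick n. sorted s}" by auto
  qed auto
qed

lemma down_Cons1: "w \<in> down g \<Longrightarrow> g \<noteq> [] \<Longrightarrow> w \<in> down (x # g)"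
proof -
  assume a: "w \<in> down g" "g \<noteq> []"
  then obtain \<theta> where th: "valid_op g \<theta>" "w = act g \<theta>" using down_iff by blast
  have "valid_op (x # g) (map Suc \<theta>)" using th(1) unfolding valid_op_def by (auto simp: sorted_map)
  moreover have "act (x # g) (map Suc \<theta>) = w" using th(2) unfolding act_def by simp
  ultimately show ?thesis using down_I by metis
qed

lemma down_Cons2: "w \<in> down g \<Longrightarrow> g \<noteq> [] \<Longrightarrow> x # w \<in> down (x # g)"
proof -
  assume a: "w \<in> down g" "g \<noteq> []"
  then obtain \<theta> where th: "valid_op g \<theta>" "w = act g \<theta>" using down_iff by blast
  have "valid_op (x # g) (0 # map Suc \<theta>)" using th(1) unfolding valid_op_def by (auto simp: sorted_map)
  moreover have "act (x # g) (0 # map Suc \<theta>) = x # w" using th(2) unfolding act_def by simp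
  ultimately show ?thesis using down_I by metis
qed

lemma down_Cons3: "w \<in> down (x # g) \<Longrightarrow> x # w \<in> down (x # g)"
proof -
  assume a: "w \<in> down (x # g)"
  then obtain \<theta> where th: "valid_op (x # g) \<theta>" "w = act (x # g) \<theta>" using down_iff by blast
  have "valid_op (x # g) (0 # \<theta>)" using th(1) unfolding valid_op_def by auto
  moreover have "act (x # g) (0 # \<theta>) = x # w" using th(2) unfolding act_def by simp
  ultimately show ?thesis using down_I by metis
qed

lemma down_single: "[x] \<in> down (x # g)"
proof -
  have "valid_op (x # g) [0]" unfolding valid_op_def by auto
  moreover have "act (x # g) [0] = [x]" unfolding act_def by simp
  ultimately show ?thesis using down_I by metis
qed

lemma remdups_down1: "w \<noteq> [] \<Longrightarrow> remdups_adj w \<in> down w"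
proof (induction w rule: remdups_adj.induct)
  case (2 x) then show ?case using down_self by simp
next
  case (3 x y xs)
  show ?case
  proof (cases "x = y")
    case True then show ?thesis using 3 down_Cons1 by simp
  next
    case False then show ?thesis using 3 down_Cons2 by simp
  qed
qed auto

lemma remdups_down2: "w \<noteq> [] \<Longrightarrow> w \<in> down (remdups_adj w)"
proof (induction w rule: remdups_adj.induct)
  case (2 x) then show ?case using down_self by simp
next
  case (3 x y xs)
  show ?case
  proof (cases "x = y")
    case True
    have IH: "x # xs \<in> down (remdups_adj (x # xs))" using 3 True by simp
    obtain R' where R': "remdups_adj (x # xs) = x # R'"
      by (metis remdups_adj_Cons_alt)
    show ?thesis using True down_Cons3[of "x # xs" x R'] IH R' by simp
  next
    case False
    have IH: "y # xs \<in> down (remdups_adj (y # xs))" using 3 False by simp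
    then show ?thesis using False down_Cons2 by simp
  qed
qed auto

lemma dl_down: "j < length t \<Longrightarrow> 1 < length t \<Longrightarrow> dl j t \<in> down t"
proof (induction j t rule: dl.induct)
  case (2 x xs) then show ?case using down_Cons1 down_self by simp
next
  case (3 j x xs)
  then have "xs \<noteq> []" by auto
  show ?case
  proof (cases "1 < length xs")
    case True then show ?thesis using 3 down_Cons2 by simp
  next
    case False
    then obtain y where "xs = [y]" using \<open>xs \<noteq> []\<close> by (cases xs) auto
    then show ?thesis using 3(2) down_single by simp
  qed
qed auto



lemma face_down: assumes t: "1 < length t" and s: "s \<in> simplex (length t - 1)"
  and j: "j < length t" "j \<notin> set s"
  shows "act t s \<in> down (dl j t)"
proof -
  define s' where "s' = map (\<lambda>x. if x < j then x else x - 1) s"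
  have sv: "s \<noteq> []" "sorted s" "\<forall>x\<in>set s. x < length t"
    using s t unfolding simplex_def thick_def by auto
  have "valid_op (dl j t) s'"
    unfolding valid_op_def s'_def
  proof (intro conjI)
    show "map (\<lambda>x. if x < j then x else x - 1) s \<noteq> []" using sv by simp
    show "sorted (map (\<lambda>x. if x < j then x else x - 1) s)"
      unfolding sorted_map by (rule sorted_wrt_mono_rel[OF _ sv(2)]) auto
    show "\<forall>x\<in>set (map (\<lambda>x. if x < j then x else x - 1) s). x < length (dl j t)"
    proof
      fix y assume "y \<in> set (map (\<lambda>x. if x < j then x else x - 1) s)"
      then obtain x where x: "x \<in> set s" "y = (if x < j then x else x - 1)" by auto
      then have "x < length t" "x \<noteq> j" using sv(3) j(2) by auto
      then show "y < length (dl j t)" using x(2) j(1) by auto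
    qed
  qed
  moreover have "act (dl j t) s' = act t s"
    unfolding act_def s'_def map_map
  proof (rule map_cong[OF refl])
    fix x assume "x \<in> set s"
    then have x: "x < length t" "x \<noteq> j" using sv(3) j(2) by auto
    show "((!) (dl j t) \<circ> (\<lambda>x. if x < j then x else x - 1)) x = t ! x"
    proof (cases "x < j")
      case True then show ?thesis using x j(1) by (simp add: nth_dl)
    next
      case False
      then have "j < x" using x by simp
      then have q: "x - 1 < length t - 1" "\<not> x - 1 < j" "Suc (x - 1) = x" using x by auto
      have "dl j t ! (x - 1) = t ! x" using nth_dl[of j t "x - 1"] j(1) q by simp
      then show ?thesis using False by simp
    qed
  qed
  ultimately show ?thesis using down_I by metis
qed

lemma nd_act_strict: "nd (act g \<theta>) \<Longrightarrow> sorted \<theta> \<Longrightarrow> sorted_wrt (<) \<theta>"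
proof (induction \<theta> rule: nd.induct)
  case (1 a b r)
  then have "a \<noteq> b" unfolding act_def by auto
  moreover have "nd (act g (b # r))" using 1(2) unfolding act_def by simp
  ultimately show ?case using 1 by (auto simp: order.strict_iff_order)
qed auto

lemma subseq_map_nth: "sorted_wrt (<) \<theta> \<Longrightarrow> \<forall>i\<in>set \<theta>. i < length g \<Longrightarrow> subseq (map ((!) g) \<theta>) g"
proof (induction g arbitrary: \<theta>)
  case Nil then show ?case by (cases \<theta>) auto
next
  case (Cons x g)
  show ?case
  proof (cases \<theta>)
    case Nil then show ?thesis by simp
  next
    case (Cons i \<theta>')
    have pos: "\<forall>j\<in>set \<theta>'. 0 < j" using Cons.prems Cons by auto
    show ?thesis
    proof (cases i)
      case 0
      have "sorted_wrt (<) (map (\<lambda>j. j - 1) \<theta>')"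
        unfolding sorted_wrt_map
        by (rule sorted_wrt_mono_rel[of _ "(<)"]) (use pos Cons.prems Cons in auto)
      moreover have "\<forall>j\<in>set (map (\<lambda>j. j - 1) \<theta>'). j < length g" using Cons.prems Cons pos by auto
      ultimately have "subseq (map ((!) g) (map (\<lambda>j. j - 1) \<theta>')) g"
        using Cons.IH by blast
      moreover have B: "map ((!) (x # g)) \<theta>' = map ((!) g) (map (\<lambda>j. j - 1) \<theta>')"
        using pos by (auto simp: nth_Cons')
      ultimately have C: "subseq (map ((!) (x # g)) \<theta>') g" by (subst B)
      show ?thesis using C Cons 0 by simp
    next
      case (Suc i')
      have pos2: "\<forall>j\<in>set \<theta>. 0 < j" using pos Cons Suc by auto
      have "sorted_wrt (<) (map (\<lambda>j. j - 1) \<theta>)"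
        unfolding sorted_wrt_map
        by (rule sorted_wrt_mono_rel[of _ "(<)"]) (use pos2 Cons.prems in auto)
      moreover have "\<forall>j\<in>set (map (\<lambda>j. j - 1) \<theta>). j < length g" using Cons.prems pos2 by auto
      ultimately have "subseq (map ((!) g) (map (\<lambda>j. j - 1) \<theta>)) g"
        using Cons.IH by blast
      moreover have B: "map ((!) (x # g)) \<theta> = map ((!) g) (map (\<lambda>j. j - 1) \<theta>)"
        using pos2 by (auto simp: nth_Cons')
      ultimately have C: "subseq (map ((!) (x # g)) \<theta>) g" by (subst B)
      show ?thesis using C by blast
    qed
  qed
qed

lemma nd_down_subseq: "nd w \<Longrightarrow> w \<in> down g \<Longrightarrow> g \<noteq> [] \<Longrightarrow> subseq w g"
proof -
  assume a: "nd w" "w \<in> down g" "g \<noteq> []"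
  then obtain \<theta> where th: "valid_op g \<theta>" "w = act g \<theta>" using a down_iff by blast
  have "sorted_wrt (<) \<theta>" using nd_act_strict a(1) th unfolding valid_op_def by blast
  then show ?thesis using subseq_map_nth th unfolding valid_op_def act_def by blast
qed

lemma subseq_dl: "subseq c g \<Longrightarrow> Suc (length c) = length g \<Longrightarrow> \<exists>j<length g. c = dl j g"
proof (induction g arbitrary: c)
  case Nil then show ?case by simp
next
  case (Cons x g)
  from Cons.prems(1) show ?case
  proof (cases rule: list_emb.cases)
    case list_emb_Nil then show ?thesis using Cons.prems by simp
  next
    case (list_emb_Cons)
    then have "c = g" using subseq_same_length Cons.prems(2) by simp
    then show ?thesis by (intro exI[of _ 0]) simp
  next
    case (list_emb_Cons2 y xs)
    then obtain j where "j < length g" "xs = dl j g" using Cons.IH Cons.prems(2) by auto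
    then show ?thesis using list_emb_Cons2 by (intro exI[of _ "Suc j"]) simp
  qed
qed



definition nxt :: "nat \<Rightarrow> nat \<Rightarrow> nat \<Rightarrow> nat set" where
  "nxt p k a = {b. b \<le> p \<and> (b = a \<or> b = Suc a \<or> (Suc a = k \<and> b = Suc k))}"

lemma sh_props: assumes "s \<in> simplex p - horn p k"
  shows "sorted s" "s \<noteq> []" "set s \<subseteq> {0..p}" "\<And>j. j \<le> p \<Longrightarrow> j \<noteq> k \<Longrightarrow> j \<in> set s"
  using assms unfolding simplex_def horn_def face_def thick_def by auto

lemma sh_step: assumes "s \<in> simplex p - horn p k" "Suc i < length s" "k < p"
  shows "s ! Suc i \<in> nxt p k (s ! i)"
proof -
  note P = sh_props[OF assms(1)]
  let ?a = "s ! i" and ?b = "s ! Suc i"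
  have ab: "?a \<le> ?b" using P(1) assms(2) by (simp add: sorted_iff_nth_mono)
  have "?b \<in> set s" using assms(2) by simp
  then have bp: "?b \<le> p" using P(3) by auto
  have btw: "c \<notin> set s" if "?a < c" "c < ?b" for c
  proof
    assume "c \<in> set s"
    then obtain q where q: "q < length s" "s ! q = c" by (auto simp: in_set_conv_nth)
    show False
    proof (cases "q \<le> i")
      case True then have "s ! q \<le> ?a" using P(1) assms(2) by (simp add: sorted_iff_nth_mono)
      then show False using q that by simp
    next
      case False then have "Suc i \<le> q" by simp
      then have "?b \<le> s ! q" using sorted_nth_mono[OF P(1) _ q(1)] by blast
      then show False using q that by simp
    qed
  qed
  show ?thesis
  proof (cases "?b = ?a \<or> ?b = Suc ?a")
    case True then show ?thesis using bp unfolding nxt_def by auto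
  next
    case False
    then have lt: "Suc ?a < ?b" using ab by auto
    then have "Suc ?a \<notin> set s" using btw by simp
    then have ak: "Suc ?a = k" using P(4)[of "Suc ?a"] lt bp by auto
    have "?b = Suc k"
    proof (rule ccontr)
      assume "?b \<noteq> Suc k"
      then have "Suc k < ?b" using lt ak by simp
      then have "Suc k \<notin> set s" using btw ak by simp
      then show False using P(4)[of "Suc k"] assms(3) by simp
    qed
    then show ?thesis using ak bp unfolding nxt_def by auto
  qed
qed

lemma sh_hd: assumes "s \<in> simplex p - horn p k" "0 < k" shows "s ! 0 = 0"
proof -
  note P = sh_props[OF assms(1)]
  have "0 \<in> set s" using P(4)[of 0] assms(2) by simp
  then obtain q where "q < length s" "s ! q = 0" by (auto simp: in_set_conv_nth)
  then have "s ! 0 \<le> 0" using P(1) by (metis le0 sorted_iff_nth_mono)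
  then show ?thesis by simp
qed

lemma inj_nxt: assumes "nd t" "length t = Suc p" "0 < k" "k < p" "t ! (k - 1) \<noteq> t ! Suc k"
  shows "inj_on ((!) t) (nxt p k a)"
proof (rule inj_onI)
  fix x y assume x: "x \<in> nxt p k a" and y: "y \<in> nxt p k a" and e: "t ! x = t ! y"
  have ndn: "\<And>i. Suc i < length t \<Longrightarrow> t ! i \<noteq> t ! Suc i" using assms(1) nd_nth by blast
  show "x = y"
  proof (rule ccontr)
    assume ne: "x \<noteq> y"
    { fix x y assume x: "x \<in> nxt p k a" and y: "y \<in> nxt p k a" and e: "t ! x = t ! y" and l: "x < y"
      have xp: "x \<le> p" "y \<le> p" using x y unfolding nxt_def by auto
      have False
      proof (cases "y = Suc x")
        case True then show False using ndn[of x] e xp assms(2) by simp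
      next
        case False
        then have "x = a \<and> Suc a = k \<and> y = Suc k" using x y l unfolding nxt_def by auto
        then have "x = k - 1" "y = Suc k" by auto
        then show False using e assms(5) by simp
      qed }
    then show False using x y e ne by (metis linorder_neqE_nat)
  qed
qed

lemma inj_aux: "length s1 = length s2 \<Longrightarrow> s1 \<noteq> [] \<Longrightarrow> s1 ! 0 = s2 ! 0 \<Longrightarrow> map f s1 = map f s2 \<Longrightarrow>
  (\<forall>i. Suc i < length s1 \<longrightarrow> s1 ! Suc i \<in> N (s1 ! i)) \<Longrightarrow>
  (\<forall>i. Suc i < length s2 \<longrightarrow> s2 ! Suc i \<in> N (s2 ! i)) \<Longrightarrow> (\<forall>a. inj_on f (N a)) \<Longrightarrow> s1 = s2"
proof (induction s1 arbitrary: s2)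
  case Nil then show ?case by simp
next
  case (Cons x r1)
  obtain y r2 where s2: "s2 = y # r2" using Cons.prems(1) by (cases s2) auto
  have xy: "x = y" using Cons.prems(3) s2 by simp
  show ?case
  proof (cases r1)
    case Nil then show ?thesis using s2 xy Cons.prems(1) by simp
  next
    case (Cons x1 r1')
    obtain y1 r2' where r2: "r2 = y1 # r2'" using Cons Cons.prems(1) s2 by (cases r2) auto
    have "x1 \<in> N x" using Cons.prems(5)[rule_format, of 0] \<open>r1 = x1 # r1'\<close> by simp
    moreover have "y1 \<in> N x" using Cons.prems(6)[rule_format, of 0] s2 r2 xy by simp
    moreover have "f x1 = f y1" using Cons.prems(4) s2 r2 \<open>r1 = x1 # r1'\<close> by simp
    ultimately have "x1 = y1" using Cons.prems(7) by (meson inj_onD)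
    have "r1 = r2"
    proof (rule Cons.IH)
      show "length r1 = length r2" "r1 \<noteq> []" "r1 ! 0 = r2 ! 0" "map f r1 = map f r2"
        using Cons.prems(1,4) s2 r2 \<open>r1 = x1 # r1'\<close> \<open>x1 = y1\<close> by auto
      show "\<forall>i. Suc i < length r1 \<longrightarrow> r1 ! Suc i \<in> N (r1 ! i)"
        using Cons.prems(5) by (metis Suc_less_eq length_Cons nth_Cons_Suc)
      show "\<forall>i. Suc i < length r2 \<longrightarrow> r2 ! Suc i \<in> N (r2 ! i)"
        using Cons.prems(6) s2 by (metis Suc_less_eq length_Cons nth_Cons_Suc)
      show "\<forall>a. inj_on f (N a)" using Cons.prems(7) .
    qed
    then show ?thesis using s2 xy by simp
  qed
qed

lemma sh_inj: assumes "nd t" "length t = Suc p" "0 < k" "k < p" "t ! (k - 1) \<noteq> t ! Suc k"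
  shows "inj_on (act t) (simplex p - horn p k)"
proof (rule inj_onI)
  fix s1 s2 assume s1: "s1 \<in> simplex p - horn p k" and s2: "s2 \<in> simplex p - horn p k"
    and e: "act t s1 = act t s2"
  show "s1 = s2"
  proof (rule inj_aux[of s1 s2 "(!) t" "nxt p k"])
    show "length s1 = length s2" using e by (metis length_act)
    show "s1 \<noteq> []" using sh_props(2)[OF s1] .
    show "s1 ! 0 = s2 ! 0" using sh_hd[OF s1 assms(3)] sh_hd[OF s2 assms(3)] by simp
    show "map ((!) t) s1 = map ((!) t) s2" using e unfolding act_def .
    show "\<forall>i. Suc i < length s1 \<longrightarrow> s1 ! Suc i \<in> nxt p k (s1 ! i)" using sh_step[OF s1 _ assms(4)] by blast
    show "\<forall>i. Suc i < length s2 \<longrightarrow> s2 ! Suc i \<in> nxt p k (s2 ! i)" using sh_step[OF s2 _ assms(4)] by blast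
    show "\<forall>a. inj_on ((!) t) (nxt p k a)" using inj_nxt[OF assms] by blast
  qed
qed

lemma RC: "(\<forall>i. Suc i < length s \<longrightarrow> s ! i \<noteq> s ! Suc i \<longrightarrow> f (s ! i) \<noteq> f (s ! Suc i)) \<Longrightarrow>
   remdups_adj (map f s) = map f (remdups_adj s)"
proof (induction s rule: remdups_adj.induct)
  case (3 x y xs)
  have H: "\<forall>i. Suc i < length (y # xs) \<longrightarrow> (y # xs) ! i \<noteq> (y # xs) ! Suc i \<longrightarrow>
      f ((y # xs) ! i) \<noteq> f ((y # xs) ! Suc i)"
    using 3(3) by (metis Suc_less_eq length_Cons nth_Cons_Suc)
  show ?case
  proof (cases "x = y")
    case True
    have "remdups_adj (map f (x # xs)) = map f (remdups_adj (x # xs))" using 3(1) True H by simp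
    then show ?thesis using True by simp
  next
    case False
    then have "f x \<noteq> f y" using 3(3)[rule_format, of 0] by simp
    then show ?thesis using 3(2) False H by simp
  qed
qed auto

lemma sorted_remdups_strict: "sorted s \<Longrightarrow> sorted_wrt (<) (remdups_adj s)"
proof (induction s rule: remdups_adj.induct)
  case (3 x y xs)
  show ?case
  proof (cases "x = y")
    case True then show ?thesis using 3 by simp
  next
    case False
    have "sorted_wrt (<) (remdups_adj (y # xs))" using 3 False by simp
    moreover have "\<forall>z\<in>set (y # xs). x < z" using 3(3) False by auto
    ultimately show ?thesis using False by simp
  qed
qed auto

lemma take_nth_map: "k \<le> length t \<Longrightarrow> map ((!) t) [0..<k] = take k t"
  by (rule nth_equalityI) auto

lemma drop_nth_map: "map ((!) t) [k..<length t] = drop k t"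
  by (rule nth_equalityI) auto

lemma sh_E: assumes "nd t" "length t = Suc p" "0 < k" "k < p" "t ! (k - 1) \<noteq> t ! Suc k"
  and s: "s \<in> simplex p - horn p k"
  shows "remdups_adj (act t s) = map ((!) t) (remdups_adj s)"
proof -
  note P = sh_props[OF s]
  have "\<forall>i. Suc i < length s \<longrightarrow> s ! i \<noteq> s ! Suc i \<longrightarrow> t ! (s ! i) \<noteq> t ! (s ! Suc i)"
  proof (intro allI impI)
    fix i assume i: "Suc i < length s" "s ! i \<noteq> s ! Suc i"
    have SI: "s ! Suc i \<in> nxt p k (s ! i)" using sh_step[OF s i(1) assms(4)] .
    have "s ! i \<in> set s" using i(1) by simp
    then have "s ! i \<le> p" using P(3) by auto
    then have SS: "s ! i \<in> nxt p k (s ! i)" unfolding nxt_def by simp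
    have I: "inj_on ((!) t) (nxt p k (s ! i))" by (rule inj_nxt[OF assms(1-5)])
    show "t ! (s ! i) \<noteq> t ! (s ! Suc i)"
    proof
      assume "t ! (s ! i) = t ! (s ! Suc i)"
      then have "s ! i = s ! Suc i" using inj_onD[OF I _ SS SI] by simp
      then show False using i(2) by simp
    qed
  qed
  then show ?thesis unfolding act_def by (rule RC)
qed

lemma sh_set: assumes s: "s \<in> simplex p - horn p k"
  shows "set s = {0..p} \<or> set s = {0..p} - {k}"
proof -
  note P = sh_props[OF s]
  show ?thesis
  proof (cases "k \<in> set s")
    case True
    have "{0..p} \<subseteq> set s"
    proof
      fix x assume "x \<in> {0..p}"
      then show "x \<in> set s" using True P(4)[of x] by (cases "x = k") auto
    qed
    then show ?thesis using P(3) by blast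
  next
    case False
    have "{0..p} - {k} \<subseteq> set s"
    proof
      fix x assume "x \<in> {0..p} - {k}" then show "x \<in> set s" using P(4)[of x] by simp
    qed
    moreover have "set s \<subseteq> {0..p} - {k}" using P(3) False by blast
    ultimately show ?thesis by blast
  qed
qed

lemma sh_image: assumes "nd t" "length t = Suc p" "0 < k" "k < p" "t ! (k - 1) \<noteq> t ! Suc k"
  and s: "s \<in> simplex p - horn p k"
  shows "remdups_adj (act t s) = t \<or> remdups_adj (act t s) = dl k t"
proof -
  note P = sh_props[OF s]
  have E: "remdups_adj (act t s) = map ((!) t) (remdups_adj s)" by (rule sh_E[OF assms])
  have "sorted_wrt (<) (remdups_adj s)" by (rule sorted_remdups_strict[OF P(1)])
  then have st: "sorted (remdups_adj s)" "distinct (remdups_adj s)"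
    unfolding strict_sorted_iff by simp_all
  from sh_set[OF s] show ?thesis
  proof
    assume ss: "set s = {0..p}"
    have "set (remdups_adj s) = set [0..<Suc p]"
      unfolding remdups_adj_set ss set_upt atLeastLessThanSuc_atLeastAtMost ..
    then have "remdups_adj s = [0..<Suc p]"
      by (rule sorted_distinct_set_unique[OF st sorted_upt distinct_upt])
    then show ?thesis using E assms(2) map_nth[of t] by simp
  next
    assume ss: "set s = {0..p} - {k}"
    have "set ([0..<k] @ [Suc k..<Suc p]) = {0..p} - {k}"
    proof (rule set_eqI)
      fix x show "x \<in> set ([0..<k] @ [Suc k..<Suc p]) \<longleftrightarrow> x \<in> {0..p} - {k}"
        using assms(4) by (cases "x < k") auto
    qed
    then have "set (remdups_adj s) = set ([0..<k] @ [Suc k..<Suc p])" using ss by simp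
    moreover have "sorted ([0..<k] @ [Suc k..<Suc p])" by (auto simp: sorted_append simp del: upt_Suc)
    moreover have "distinct ([0..<k] @ [Suc k..<Suc p])" by auto
    ultimately have "remdups_adj s = [0..<k] @ [Suc k..<Suc p]"
      using sorted_distinct_set_unique[OF st] by blast
    then have "remdups_adj (act t s) = map ((!) t) [0..<k] @ map ((!) t) [Suc k..<length t]"
      using E assms(2) by simp
    also have "\<dots> = take k t @ drop (Suc k) t"
      using take_nth_map[of k t] drop_nth_map[of t "Suc k"] assms(2,4) by (simp del: upt_Suc)
    also have "\<dots> = dl k t" by (simp add: dl_conv)
    finally show ?thesis by simp
  qed
qed



definition SS :: "nat \<Rightarrow> nat \<Rightarrow> nat list set" where
  "SS n h = thick_horn n h \<union> simplex n"

definition Tp :: "nat \<Rightarrow> nat \<Rightarrow> nat list set" where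
  "Tp n h = {t \<in> thick n. nd t \<and> t \<notin> SS n h \<and> (\<exists>t'. tg h t = Some t' \<and> length t' < length t)}"

lemma nd_distinct_adj: "nd w \<longleftrightarrow> distinct_adj w"
  by (induction w rule: nd.induct) auto

lemma tg_thick: assumes "tg h w = Some w'" "w \<in> thick n" "h \<le> n" shows "w' \<in> thick n"
proof -
  have "set w' \<subseteq> insert h (set w)" using tg_set[OF assms(1)] by blast
  moreover have "w' \<noteq> []" using tg_hd[OF assms(1)] by auto
  ultimately show ?thesis using assms(2,3) unfolding thick_def by auto
qed

lemma th_iff: "w \<in> thick_horn n h \<longleftrightarrow> w \<in> thick n \<and> (\<exists>j\<le>n. j \<noteq> h \<and> j \<notin> set w)"
  unfolding thick_horn_def by auto

lemma horn_iff: "s \<in> horn p k \<longleftrightarrow> s \<in> simplex p \<and> (\<exists>j\<le>p. j \<noteq> k \<and> j \<notin> set s)"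
  unfolding horn_def face_def by auto

lemma not_th: "w \<in> thick n \<Longrightarrow> w \<notin> thick_horn n h \<Longrightarrow> j \<le> n \<Longrightarrow> j \<noteq> h \<Longrightarrow> j \<in> set w"
  unfolding thick_horn_def by auto

lemma in_th: "w \<in> thick n \<Longrightarrow> j \<le> n \<Longrightarrow> j \<noteq> h \<Longrightarrow> j \<notin> set w \<Longrightarrow> w \<in> thick_horn n h"
  unfolding thick_horn_def by auto

lemma S_compat: assumes hn: "0 < h" "h < n" and w: "w \<in> thick n" "nd w" "tg h w = Some w'" "w \<in> SS n h"
  shows "w' \<in> SS n h"
proof -
  have w'T: "w' \<in> thick n" using tg_thick[OF w(3,1)] hn by simp
  have st: "insert h (set w') = insert h (set w)" using tg_set[OF w(3)] .
  show ?thesis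
  proof (cases "w \<in> thick_horn n h")
    case True
    then obtain j where j: "j \<le> n" "j \<noteq> h" "j \<notin> set w" unfolding th_iff by blast
    then have "j \<notin> set w'" using st by blast
    then show ?thesis using in_th[OF w'T j(1,2)] unfolding SS_def by blast
  next
    case False
    then have ws: "w \<in> simplex n" using w(4) unfolding SS_def by blast
    have "w \<notin> horn n h"
    proof
      assume "w \<in> horn n h"
      then obtain j where "j \<le> n" "j \<noteq> h" "j \<notin> set w" unfolding horn_iff by blast
      then show False using not_th[OF w(1) False] by blast
    qed
    then have wsh: "w \<in> simplex n - horn n h" using ws by blast
    have sw: "sorted_wrt (<) w" using sorted_remdups_strict[of w] nd_remdups_adj_id[OF w(2)] ws
      unfolding simplex_def by simp
    then have st2: "sorted w" "distinct w" unfolding strict_sorted_iff by simp_all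
    define u where "u = [0..<h] @ [Suc h..<Suc n]"
    have tu: "tg h u = Some [0..<Suc n]" using tg_sorted[of 0 h n] hn unfolding u_def by simp
    have tu2: "tg h [0..<Suc n] = Some u" using tg_invol[OF tu] .
    have uS: "u \<in> SS n h"
    proof -
      have "sorted u" unfolding u_def by (auto simp: sorted_append simp del: upt_Suc)
      moreover have "u \<in> thick n" unfolding u_def thick_def using hn by auto
      ultimately show ?thesis unfolding SS_def simplex_def by blast
    qed
    have aS: "[0..<Suc n] \<in> SS n h" unfolding SS_def simplex_def thick_def by (auto simp del: upt_Suc)
    from sh_set[OF wsh] show ?thesis
    proof
      assume "set w = {0..n}"
      then have "set w = set [0..<Suc n]" unfolding set_upt atLeastLessThanSuc_atLeastAtMost .
      then have "w = [0..<Suc n]" by (rule sorted_distinct_set_unique[OF st2 sorted_upt distinct_upt])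
      then show ?thesis using tu2 w(3) uS by simp
    next
      assume sw2: "set w = {0..n} - {h}"
      have "set u = {0..n} - {h}"
      proof (rule set_eqI)
        fix x show "x \<in> set u \<longleftrightarrow> x \<in> {0..n} - {h}"
          unfolding u_def using hn by (cases "x < h") auto
      qed
      then have "set w = set u" using sw2 by simp
      moreover have "sorted u" "distinct u" unfolding u_def by (auto simp: sorted_append simp del: upt_Suc)
      ultimately have "w = u" using sorted_distinct_set_unique[OF st2] by blast
      then show ?thesis using tu w(3) aS by simp
    qed
  qed
qed

lemma unmatched: assumes hn: "0 < h" "h < n" and w: "w \<in> thick n" "nd w" "tg h w = None"
  shows "w \<in> thick_horn n h"
proof (cases "Suc h \<in> set w")
  case True
  then have "set w \<subseteq> {h, Suc h}" using tg_none[OF w(3,2)] by blast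
  then have "0 \<notin> set w" using hn by auto
  then show ?thesis using in_th[OF w(1), of 0] hn by simp
next
  case False
  then show ?thesis using in_th[OF w(1), of "Suc h"] hn by simp
qed

lemma top_len: assumes hn: "0 < h" "h < n" and t: "t \<in> Tp n h" shows "Suc n \<le> length t"
proof -
  have tT: "t \<in> thick n" and nS: "t \<notin> thick_horn n h" using t unfolding Tp_def SS_def by auto
  obtain t' where "tg h t = Some t'" "length t' < length t" using t unfolding Tp_def by auto
  then obtain k where k: "Suc k < length t" "t ! k = h" using tg_top by blast
  have "h \<in> set t" using k by (metis Suc_lessD nth_mem)
  have "{0..n} \<subseteq> set t"
  proof
    fix x assume "x \<in> {0..n}"
    then show "x \<in> set t" using not_th[OF tT nS, of x] \<open>h \<in> set t\<close> by (cases "x = h") auto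
  qed
  then have "card {0..n} \<le> card (set t)" by (rule card_mono[OF finite_set])
  then show ?thesis using card_length[of t] by simp
qed

fun alt :: "nat \<Rightarrow> nat \<Rightarrow> nat list" where
  "alt n 0 = [n]"
| "alt n (Suc N) = n # (n - 1) # alt n N"

lemma alt_props: "hd (alt n N) = n" "alt n N \<noteq> []" "set (alt n N) \<subseteq> {n - 1, n}"
  by (induction N) auto

lemma alt_nd: "0 < n \<Longrightarrow> nd (alt n N)"
proof (induction N)
  case (Suc N) then show ?case by (cases N) auto
qed auto

lemma big_words: assumes hn: "0 < h" "h < n"
  shows "\<exists>w. w \<in> thick n \<and> nd w \<and> w \<notin> SS n h \<and> N \<le> length w"
proof -
  define w where "w = [0..<n] @ alt n (Suc N)"
  have len: "N \<le> length w" unfolding w_def by (induction N) auto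
  have T: "w \<in> thick n" unfolding w_def thick_def using alt_props(3)[of n "Suc N"] by auto
  have "distinct_adj [0..<n]" by (simp add: distinct_adj_conv_nth)
  moreover have "distinct_adj (alt n (Suc N))" using alt_nd[of n "Suc N"] hn nd_distinct_adj by simp
  moreover have "last [0..<n] \<noteq> hd (alt n (Suc N))" using hn by (simp add: alt_props)
  ultimately have ND: "nd w" unfolding w_def nd_distinct_adj distinct_adj_append_iff by blast
  have ns: "\<not> sorted w"
  proof
    assume "sorted w"
    then have "sorted (n # (n - 1) # alt n N)" unfolding w_def sorted_append by simp
    then have "n \<le> n - 1" by simp
    then show False using hn by simp
  qed
  have nh: "w \<notin> thick_horn n h"
  proof
    assume "w \<in> thick_horn n h"
    then obtain j where j: "j \<le> n" "j \<notin> set w" unfolding th_iff by blast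
    show False
    proof (cases "j < n")
      case True then show False using j unfolding w_def by simp
    next
      case False then have "j = n" using j by simp
      then show False using j alt_props(1,2)[of n "Suc N"] unfolding w_def by simp
    qed
  qed
  have "w \<notin> SS n h" using ns nh unfolding SS_def simplex_def by blast
  then show ?thesis using T ND len by blast
qed

lemma Tp_infinite: assumes hn: "0 < h" "h < n" shows "infinite (Tp n h)"
proof
  assume fin: "finite (Tp n h)"
  define M where "M = Max (length ` Tp n h)"
  have bound: "\<And>t. t \<in> Tp n h \<Longrightarrow> length t \<le> M" unfolding M_def using fin by simp
  obtain w where w: "w \<in> thick n" "nd w" "w \<notin> SS n h" "Suc M \<le> length w" using big_words[OF hn] by blast
  show False
  proof (cases "tg h w")
    case None
    then show False using unmatched[OF hn w(1,2)] w(3) unfolding SS_def by blast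
  next
    case (Some w')
    show False
    proof (cases "length w' < length w")
      case True
      then have "w \<in> Tp n h" using w Some unfolding Tp_def by blast
      then show False using bound w(4) by fastforce
    next
      case False
      have "length w' = Suc (length w)" using tg_len[OF Some] False by auto
      moreover have "w' \<in> Tp n h" unfolding Tp_def
      proof (intro CollectI conjI)
        show "w' \<in> thick n" using tg_thick[OF Some w(1)] hn by simp
        show "nd w'" using tg_nd[OF Some w(2)] .
        show "w' \<notin> SS n h"
        proof
          assume "w' \<in> SS n h"
          then have "w \<in> SS n h" using S_compat[OF hn tg_thick[OF Some w(1)] tg_nd[OF Some w(2)] tg_invol[OF Some]] hn by simp
          then show False using w(3) by simp
        qed
        show "\<exists>t'. tg h w' = Some t' \<and> length t' < length w'"
          using tg_invol[OF Some] \<open>length w' = Suc (length w)\<close> by auto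
      qed
      ultimately show False using bound w(4) by fastforce
    qed
  qed
qed



definition idx :: "nat \<Rightarrow> nat list \<Rightarrow> nat" where
  "idx h t = length t * length t + (length t - count_list t h)"

fun code :: "nat \<Rightarrow> nat list \<Rightarrow> nat" where
  "code N [] = 0"
| "code N (x # xs) = x + N * code N xs"

lemma code_bound: "\<forall>x\<in>set xs. x < N \<Longrightarrow> code N xs < N ^ length xs"
proof (induction xs)
  case (Cons x xs)
  have c: "code N xs < N ^ length xs" using Cons by simp
  have x: "x < N" using Cons by simp
  have "N * code N xs + N \<le> N * N ^ length xs"
    using mult_le_mono2[OF Suc_leI[OF c], of N] by simp
  then show ?case using x by simp
qed simp

lemma code_inj: "length xs = length ys \<Longrightarrow> \<forall>x\<in>set xs. x < N \<Longrightarrow> \<forall>x\<in>set ys. x < N \<Longrightarrow>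
  code N xs = code N ys \<Longrightarrow> xs = ys"
proof (induction xs arbitrary: ys)
  case Nil then show ?case by simp
next
  case (Cons x xs)
  then obtain y ys' where ys: "ys = y # ys'" by (cases ys) auto
  have e: "x + N * code N xs = y + N * code N ys'" using Cons.prems(4) ys by simp
  have xy: "x < N" "y < N" using Cons.prems ys by auto
  have "x = (x + N * code N xs) mod N" using xy by simp
  also have "\<dots> = (y + N * code N ys') mod N" using e by simp
  also have "\<dots> = y" using xy by simp
  finally have "x = y" .
  then have "code N xs = code N ys'" using e xy(1) by simp
  then have "xs = ys'" using Cons ys by auto
  then show ?case using ys \<open>x = y\<close> by simp
qed

definition nu :: "nat \<Rightarrow> nat \<Rightarrow> nat list \<Rightarrow> nat" where
  "nu n h t = idx h t * Suc (Suc n) ^ length t + code (Suc (Suc n)) t"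

lemma count_le: "count_list t h \<le> length t"
  by (induction t) auto

lemma idx_len: "idx h a < idx h b \<Longrightarrow> length a \<le> length b"
proof (rule ccontr)
  assume a: "idx h a < idx h b" "\<not> length a \<le> length b"
  from a(2) have s: "Suc (length b) \<le> length a" by simp
  have "Suc (length b) * Suc (length b) \<le> length a * length a" using mult_le_mono[OF s s] .
  then have "idx h b < idx h a" unfolding idx_def by simp
  then show False using a by simp
qed

lemma idx_lt_len: "length a < length b \<Longrightarrow> idx h a < idx h b"
proof -
  assume l: "length a < length b"
  then have s: "Suc (length a) \<le> length b" by simp
  have "Suc (length a) * Suc (length a) \<le> length b * length b" using mult_le_mono[OF s s] .
  then show "idx h a < idx h b" unfolding idx_def by simp
qed

lemma idx_eq_len: "idx h a = idx h b \<Longrightarrow> length a = length b"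
  using idx_lt_len[of a b h] idx_lt_len[of b a h] by (cases "length a < length b") (auto simp: not_less_iff_gr_or_eq)

lemma thick_lt: "t \<in> thick n \<Longrightarrow> \<forall>x\<in>set t. x < Suc (Suc n)"
  unfolding thick_def by auto

lemma nu_mono: assumes "a \<in> thick n" "b \<in> thick n" "idx h a < idx h b" shows "nu n h a < nu n h b"
proof -
  let ?N = "Suc (Suc n)"
  have la: "length a \<le> length b" using idx_len[OF assms(3)] .
  have "nu n h a < idx h a * ?N ^ length a + ?N ^ length a"
    unfolding nu_def using code_bound[OF thick_lt[OF assms(1)]] by simp
  also have "\<dots> = Suc (idx h a) * ?N ^ length a" by simp
  also have "\<dots> \<le> idx h b * ?N ^ length a" using assms(3) by (intro mult_le_mono) auto
  also have "\<dots> \<le> idx h b * ?N ^ length b" using la by (intro mult_le_mono) (auto intro: power_increasing)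
  also have "\<dots> \<le> nu n h b" unfolding nu_def by simp
  finally show ?thesis .
qed

lemma nu_inj: "inj_on (nu n h) (thick n)"
proof (rule inj_onI)
  fix a b assume a: "a \<in> thick n" and b: "b \<in> thick n" and e: "nu n h a = nu n h b"
  have "idx h a = idx h b"
  proof (rule ccontr)
    assume "idx h a \<noteq> idx h b"
    then consider "idx h a < idx h b" | "idx h b < idx h a" by linarith
    then show False
    proof cases
      case 1 then have "nu n h a < nu n h b" by (rule nu_mono[OF a b])
      then show False using e by simp
    next
      case 2 then have "nu n h b < nu n h a" by (rule nu_mono[OF b a])
      then show False using e by simp
    qed
  qed
  moreover then have l: "length a = length b" by (rule idx_eq_len)
  ultimately have "code (Suc (Suc n)) a = code (Suc (Suc n)) b" using e unfolding nu_def by simp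
  then show "a = b" using code_inj[OF l thick_lt[OF a] thick_lt[OF b]] by simp
qed

lemma enum: assumes inf: "infinite A" and At: "A \<subseteq> thick n"
  shows "\<exists>e::nat \<Rightarrow> nat list. (\<forall>l. e l \<in> A) \<and> inj e \<and> (\<forall>t\<in>A. \<exists>l. e l = t) \<and>
     (\<forall>l l'. l < l' \<longrightarrow> idx h (e l) \<le> idx h (e l'))"
proof -
  have ij: "inj_on (nu n h) A" using nu_inj At by (rule inj_on_subset)
  define V where "V = nu n h ` A"
  have infV: "infinite V"
  proof
    assume "finite V"
    then have "finite A" using finite_imageD[OF _ ij] unfolding V_def by simp
    then show False using inf by simp
  qed
  define e where "e l = inv_into A (nu n h) (enumerate V l)" for l
  have eV: "enumerate V l \<in> V" for l using enumerate_in_set[OF infV] .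
  have eA: "e l \<in> A" for l unfolding e_def by (rule inv_into_into) (use eV[of l] in \<open>simp add: V_def\<close>)
  have nue: "nu n h (e l) = enumerate V l" for l unfolding e_def
    by (rule f_inv_into_f) (use eV[of l] in \<open>simp add: V_def\<close>)
  have I1: "inj e"
  proof (rule injI)
    fix l l' assume "e l = e l'"
    then have "enumerate V l = enumerate V l'" using nue[of l] nue[of l'] by simp
    then show "l = l'" using inj_enumerate[OF infV] by (simp add: inj_eq)
  qed
  moreover have I2: "\<forall>t\<in>A. \<exists>l. e l = t"
  proof
    fix t assume t: "t \<in> A"
    then have "nu n h t \<in> V" unfolding V_def by simp
    then obtain l where "enumerate V l = nu n h t" using enumerate_Ex[OF infV] by blast
    then have "e l = inv_into A (nu n h) (nu n h t)" unfolding e_def by simp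
    also have "\<dots> = t" using inv_into_f_f[OF ij t] .
    finally show "\<exists>l. e l = t" by blast
  qed
  moreover have I3: "\<forall>l l'. l < l' \<longrightarrow> idx h (e l) \<le> idx h (e l')"
  proof (intro allI impI)
    fix l l' :: nat assume "l < l'"
    then have "nu n h (e l) < nu n h (e l')" using nue[of l] nue[of l'] enumerate_mono[OF _ infV] by simp
    moreover have "e l \<in> thick n" "e l' \<in> thick n" using eA At by auto
    ultimately show "idx h (e l) \<le> idx h (e l')"
    proof -
      assume A: "nu n h (e l) < nu n h (e l')" "e l \<in> thick n" "e l' \<in> thick n"
      show ?thesis
      proof (rule ccontr)
        assume "\<not> idx h (e l) \<le> idx h (e l')"
        then have "idx h (e l') < idx h (e l)" by simp
        then have "nu n h (e l') < nu n h (e l)" by (rule nu_mono[OF A(3,2)])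
        then show False using A(1) by simp
      qed
    qed
  qed
  have "(\<forall>l. e l \<in> A) \<and> inj e \<and> (\<forall>t\<in>A. \<exists>l. e l = t) \<and> (\<forall>l l'. l < l' \<longrightarrow> idx h (e l) \<le> idx h (e l'))"
    using eA I1 I2 I3 by simp
  then show ?thesis by blast
qed



lemma remdups_len_eq: "length (remdups_adj w) = length w \<Longrightarrow> remdups_adj w = w"
proof (induction w rule: remdups_adj.induct)
  case (3 x y xs)
  show ?case
  proof (cases "x = y")
    case True
    then have "length (remdups_adj (x # xs)) = Suc (Suc (length xs))" using 3(3) by simp
    moreover have "length (remdups_adj (x # xs)) \<le> Suc (length xs)"
      using remdups_adj_length[of "x # xs"] by simp
    ultimately show ?thesis by simp
  next
    case False then show ?thesis using 3 by simp
  qed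
qed auto

lemma partner_Tp: assumes hn: "0 < h" "h < n" and c: "c \<in> thick n" "nd c" "c \<notin> SS n h"
  "tg h c = Some c'" "length c < length c'"
  shows "c' \<in> Tp n h"
  unfolding Tp_def
proof (intro CollectI conjI)
  show cT: "c' \<in> thick n" using tg_thick[OF c(4,1)] hn by simp
  show "nd c'" using tg_nd[OF c(4,2)] .
  show "c' \<notin> SS n h"
  proof
    assume "c' \<in> SS n h"
    then have "c \<in> SS n h" using S_compat[OF hn cT tg_nd[OF c(4,2)] tg_invol[OF c(4)]] by simp
    then show False using c(3) by simp
  qed
  show "\<exists>t'. tg h c' = Some t' \<and> length t' < length c'" using tg_invol[OF c(4)] c(5) by auto
qed

lemma top_props: assumes "t \<in> Tp n h"
  shows "\<exists>k. 0 < k \<and> Suc k < length t \<and> t ! k = h \<and> tg h t = Some (dl k t) \<and> R h (t ! (k - 1)) (t ! Suc k)"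
proof -
  obtain t' where "tg h t = Some t'" "length t' < length t" using assms unfolding Tp_def by auto
  then show ?thesis using tg_top by metis
qed

definition kk :: "nat \<Rightarrow> nat list \<Rightarrow> nat" where
  "kk h t = (SOME k. 0 < k \<and> Suc k < length t \<and> t ! k = h \<and> tg h t = Some (dl k t) \<and> R h (t ! (k - 1)) (t ! Suc k))"

lemma kk_props: assumes "t \<in> Tp n h"
  shows "0 < kk h t" "Suc (kk h t) < length t" "t ! kk h t = h" "tg h t = Some (dl (kk h t) t)"
    "R h (t ! (kk h t - 1)) (t ! Suc (kk h t))"
  using someI_ex[OF top_props[OF assms]] unfolding kk_def by auto

definition Fam :: "nat \<Rightarrow> nat \<Rightarrow> (nat \<Rightarrow> nat list) \<Rightarrow> nat \<Rightarrow> nat list set" where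
  "Fam n h e l = SS n h \<union> (\<Union>m\<in>{..<l}. down (e m))"

locale ectx =
  fixes n h :: nat and e :: "nat \<Rightarrow> nat list"
  assumes hn: "0 < h" "h < n"
    and eA: "\<And>l. e l \<in> Tp n h" and einj: "inj e" and esurj: "\<And>t. t \<in> Tp n h \<Longrightarrow> \<exists>l. e l = t"
    and emono: "\<And>l l'. l < l' \<Longrightarrow> idx h (e l) \<le> idx h (e l')"
begin

lemma eT: "e l \<in> thick n" using eA[of l] unfolding Tp_def by auto

lemma ene: "e l \<noteq> []" using eT[of l] unfolding thick_def by auto

lemma Fam_ss: "ssubset n (Fam n h e l)"
  unfolding Fam_def
proof (rule ssubset_Un)
  show "ssubset n (SS n h)" using ssubset_S[of n h] unfolding SS_def .
  show "ssubset n (\<Union>m\<in>{..<l}. down (e m))" by (rule ssubset_UN) (rule ssubset_down[OF eT])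
qed

lemma Fam_sub: "Fam n h e l \<subseteq> thick n"
  using Fam_ss unfolding ssubset_def by blast

lemma Fam_Suc: "Fam n h e (Suc l) = Fam n h e l \<union> down (e l)"
  unfolding Fam_def by (auto simp: lessThan_Suc)

lemma earlier: assumes "c \<in> Tp n h" "idx h c < idx h (e l)" shows "\<exists>m<l. e m = c"
proof -
  obtain m where m: "e m = c" using esurj[OF assms(1)] by blast
  have "m < l"
  proof (rule ccontr)
    assume "\<not> m < l"
    then consider "m = l" | "l < m" by linarith
    then show False
    proof cases
      case 1 then show False using m assms(2) by simp
    next
      case 2 then show False using emono[OF 2] m assms(2) by simp
    qed
  qed
  then show ?thesis using m by blast
qed

lemma in_Fam: "m < l \<Longrightarrow> w \<in> down (e m) \<Longrightarrow> w \<in> Fam n h e l"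
  unfolding Fam_def by blast

lemma S_Fam: "w \<in> SS n h \<Longrightarrow> w \<in> Fam n h e l"
  unfolding Fam_def by blast


lemma idx_count_lt: "length a = length b \<Longrightarrow> count_list a h = Suc (count_list b h) \<Longrightarrow> idx h a < idx h b"
  unfolding idx_def using count_le[of a h] by simp

lemma horn_face: assumes j: "j < length (e l)" "j \<noteq> kk h (e l)"
  shows "dl j (e l) \<in> Fam n h e l"
proof -
  let ?t = "e l"
  let ?k = "kk h ?t"
  note K = kk_props[OF eA[of l]]
  have tT: "?t \<in> thick n" and ndt: "nd ?t" using eA[of l] unfolding Tp_def by auto
  define d where "d = dl j ?t"
  have lt: "1 < length ?t" using K(1,2) by simp
  have dD: "d \<in> down ?t" unfolding d_def using dl_down[OF j(1) lt] .
  have dT: "d \<in> thick n" using down_thick[OF tT] dD by blast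
  have dne: "d \<noteq> []" using dT unfolding thick_def by auto
  have ld: "length d = length ?t - 1" unfolding d_def using j(1) by simp
  define c where "c = remdups_adj d"
  have dc: "d \<in> down c" unfolding c_def using remdups_down2[OF dne] .
  have cd: "c \<in> down d" unfolding c_def using remdups_down1[OF dne] .
  have cT: "c \<in> thick n" using down_thick[OF dT] cd by blast
  have ndc: "nd c" unfolding c_def by (rule nd_remdups_adj)
  have lc: "length c \<le> length d" unfolding c_def by simp
  have "c \<in> Fam n h e l"
  proof (cases "c \<in> SS n h")
    case True then show ?thesis by (rule S_Fam)
  next
    case cS: False
    obtain c' where c': "tg h c = Some c'"
    proof (cases "tg h c")
      case None
      then have "c \<in> SS n h" using unmatched[OF hn cT ndc] unfolding SS_def by blast
      then show ?thesis using cS by simp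
    next
      case (Some c') then show ?thesis using that by blast
    qed
    show ?thesis
    proof (cases "length c' < length c")
      case True
      then have cTp: "c \<in> Tp n h" using cT ndc cS c' unfolding Tp_def by blast
      have "length c < length ?t" using lc ld lt by simp
      then have "idx h c < idx h ?t" by (rule idx_lt_len)
      then obtain m where m: "m < l" "e m = c" using earlier[OF cTp] by blast
      have "c \<in> down (e m)" using m(2) down_self cT unfolding thick_def by auto
      then show ?thesis using in_Fam[OF m(1)] by blast
    next
      case False
      then have lc': "length c' = Suc (length c)" using tg_len[OF c'] by auto
      have c'Tp: "c' \<in> Tp n h" using partner_Tp[OF hn cT ndc cS c'] lc' by simp
      obtain k' where k': "0 < k'" "Suc k' < length c'" "c' ! k' = h" "c = dl k' c'"
        using tg_top[OF tg_invol[OF c']] lc' by auto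
      have cc': "c \<in> down c'" using dl_down[of k' c'] k' by simp
      have "idx h c' < idx h ?t"
      proof (cases "length c < length d")
        case True
        then have "length c' < length ?t" using lc' ld lt by simp
        then show ?thesis by (rule idx_lt_len)
      next
        case False
        then have "length c = length d" using lc by simp
        then have cdd: "c = d" unfolding c_def by (rule remdups_len_eq)
        have tj: "?t ! j \<noteq> h"
        proof
          assume tjh: "?t ! j = h"
          have ne: "dl j ?t \<noteq> dl ?k ?t" using nd_dl_ne[OF ndt j(1) _ j(2)] K(2) by simp
          have "length (dl ?k ?t) < length ?t" using K(2) by simp
          then obtain t'' where "tg h (dl j ?t) = Some t''" "length t'' < length (dl j ?t)"
            using tg_KL[OF K(4) ndt _ j(1) tjh ne] by blast
          then show False using c' cdd lc' unfolding d_def by simp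
        qed
        have cnt1: "count_list c h = count_list ?t h" using cdd count_dl[OF j(1)] tj unfolding d_def by simp
        have "count_list c h = count_list c' h - 1" using k' count_dl[of k' c' h] by simp
        moreover have "0 < count_list c' h" using k' nth_mem[of k' c'] count_list_0_iff[of c' h] by auto
        ultimately have "count_list c' h = Suc (count_list ?t h)" using cnt1 by simp
        moreover have "length c' = length ?t" using lc' cdd ld lt by simp
        ultimately show ?thesis using idx_count_lt by simp
      qed
      then obtain m where m: "m < l" "e m = c'" using earlier[OF c'Tp] by blast
      then show ?thesis using in_Fam[OF m(1)] cc' by simp
    qed
  qed
  then show ?thesis using ssubset_closed[OF Fam_ss _ dc] unfolding d_def by simp
qed


lemma disj: assumes s: "s \<in> simplex (length (e l) - 1) - horn (length (e l) - 1) (kk h (e l))"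
  shows "act (e l) s \<notin> Fam n h e l"
proof
  let ?t = "e l"
  let ?k = "kk h ?t"
  let ?p = "length ?t - 1"
  note K = kk_props[OF eA[of l]]
  assume wF: "act ?t s \<in> Fam n h e l"
  have tT: "?t \<in> thick n" and ndt: "nd ?t" and tS: "?t \<notin> SS n h" using eA[of l] unfolding Tp_def by auto
  have lt: "length ?t = Suc ?p" using K(2) by simp
  have Rn: "?t ! (?k - 1) \<noteq> ?t ! Suc ?k" using K(5) unfolding R_def by simp
  have kp: "?k < ?p" using K(2) by simp
  define t' where "t' = dl ?k ?t"
  have tgt': "tg h t' = Some ?t" unfolding t'_def using tg_invol[OF K(4)] .
  have ndt': "nd t'" unfolding t'_def using tg_nd[OF K(4) ndt] .
  have t'T: "t' \<in> thick n" unfolding t'_def using tg_thick[OF K(4) tT] hn by simp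
  have t'S: "t' \<notin> SS n h"
  proof
    assume "t' \<in> SS n h"
    then have "?t \<in> SS n h" using S_compat[OF hn t'T ndt' tgt'] by simp
    then show False using tS by simp
  qed
  have lt': "Suc (length t') = length ?t" unfolding t'_def using K(2) by simp
  have sv: "valid_op ?t s" using s valid_iff[OF ene[of l]] by blast
  have wne: "act ?t s \<noteq> []" using act_ne[OF sv] .
  define c where "c = remdups_adj (act ?t s)"
  have cw: "c \<in> down (act ?t s)" unfolding c_def using remdups_down1[OF wne] .
  have cF: "c \<in> Fam n h e l" using ssubset_closed[OF Fam_ss wF cw] .
  have cases: "c = ?t \<or> c = t'" unfolding c_def t'_def using sh_image[OF ndt lt K(1) kp Rn s] .
  have cS: "c \<notin> SS n h" using cases tS t'S by auto
  then obtain m where m: "m < l" "c \<in> down (e m)" using cF unfolding Fam_def by blast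
  let ?g = "e m"
  have ndc: "nd c" using cases ndt ndt' by auto
  have sub: "subseq c ?g" using nd_down_subseq[OF ndc m(2) ene] .
  have ig: "idx h ?g \<le> idx h ?t" using emono[OF m(1)] .
  have lg: "length ?g \<le> length ?t"
  proof (rule ccontr)
    assume "\<not> length ?g \<le> length ?t"
    then have "idx h ?t < idx h ?g" using idx_lt_len by simp
    then show False using ig by simp
  qed
  have gt: "?g \<noteq> ?t" using einj m(1) by (metis inj_eq less_irrefl)
  have gTp: "?g \<in> Tp n h" using eA .
  have ndg: "nd ?g" using gTp unfolding Tp_def by auto
  from cases show False
  proof
    assume "c = ?t"
    then have "length ?t \<le> length ?g" using list_emb_length[OF sub] by simp
    then have "c = ?g" using subseq_same_length[OF sub] lg \<open>c = ?t\<close> by simp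
    then show False using gt \<open>c = ?t\<close> by simp
  next
    assume ct': "c = t'"
    have l1: "length t' \<le> length ?g" using list_emb_length[OF sub] ct' by simp
    show False
    proof (cases "length ?g = length t'")
      case True
      then have "t' = ?g" using subseq_same_length[OF sub] ct' by simp
      then have "t' \<in> Tp n h" using gTp by simp
      then obtain u where "tg h t' = Some u" "length u < length t'" unfolding Tp_def by auto
      then show False using tgt' lt' by simp
    next
      case False
      then have lgt: "length ?g = length ?t" using l1 lg lt' by simp
      then obtain j where j: "j < length ?g" "t' = dl j ?g"
        using subseq_dl[OF sub] ct' lt' by auto
      note KG = kk_props[OF gTp]
      have gj: "?g ! j \<noteq> h"
      proof
        assume gjh: "?g ! j = h"
        show False
        proof (cases "dl j ?g = dl (kk h ?g) ?g")
          case True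
          then have "tg h t' = Some ?g" using tg_invol[OF KG(4)] j(2) by simp
          then show False using tgt' gt by simp
        next
          case False
          have "length (dl (kk h ?g) ?g) < length ?g" using KG(2) by simp
          then obtain u where "tg h (dl j ?g) = Some u" "length u < length (dl j ?g)"
            using tg_KL[OF KG(4) ndg _ j(1) gjh False] by blast
          then show False using tgt' j(2) lt' by simp
        qed
      qed
      have c1: "count_list t' h = count_list ?g h" using j count_dl[OF j(1)] gj by simp
      have "count_list t' h = count_list ?t h - 1" unfolding t'_def using count_dl[of ?k ?t h] K(2,3) by simp
      moreover have "0 < count_list ?t h"
        using K(2,3) nth_mem[of ?k ?t] count_list_0_iff[of ?t h] by auto
      ultimately have "count_list ?t h = Suc (count_list ?g h)" using c1 by simp
      then have "idx h ?t < idx h ?g" using idx_count_lt lgt by simp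
      then show False using ig by simp
    qed
  qed
qed

lemma cover: assumes w: "w \<in> thick n" shows "\<exists>l. w \<in> Fam n h e l"
proof -
  have wne: "w \<noteq> []" using w unfolding thick_def by auto
  define c where "c = remdups_adj w"
  have wc: "w \<in> down c" unfolding c_def using remdups_down2[OF wne] .
  have cw: "c \<in> down w" unfolding c_def using remdups_down1[OF wne] .
  have cT: "c \<in> thick n" using down_thick[OF w] cw by blast
  have ndc: "nd c" unfolding c_def by (rule nd_remdups_adj)
  have cne: "c \<noteq> []" using cT unfolding thick_def by auto
  show ?thesis
  proof (cases "c \<in> SS n h")
    case True
    then have "w \<in> SS n h" using ssubset_closed[OF _ True wc] ssubset_S[of n h] unfolding SS_def by blast
    then show ?thesis using S_Fam by blast
  next
    case cS: False
    obtain c' where c': "tg h c = Some c'"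
    proof (cases "tg h c")
      case None
      then have "c \<in> SS n h" using unmatched[OF hn cT ndc] unfolding SS_def by blast
      then show ?thesis using cS by simp
    next
      case (Some c') then show ?thesis using that by blast
    qed
    show ?thesis
    proof (cases "length c' < length c")
      case True
      then have "c \<in> Tp n h" using cT ndc cS c' unfolding Tp_def by blast
      then obtain m where "e m = c" using esurj by blast
      then have "w \<in> Fam n h e (Suc m)" using in_Fam[of m "Suc m" w] wc by simp
      then show ?thesis by blast
    next
      case False
      then have lc': "length c' = Suc (length c)" using tg_len[OF c'] by auto
      have c'Tp: "c' \<in> Tp n h" using partner_Tp[OF hn cT ndc cS c'] lc' by simp
      obtain k' where k': "0 < k'" "Suc k' < length c'" "c' ! k' = h" "c = dl k' c'"
        using tg_top[OF tg_invol[OF c']] lc' by auto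
      have cc': "c \<in> down c'" using dl_down[of k' c'] k' by simp
      have "c' \<noteq> []" using k' by auto
      then have wc': "w \<in> down c'" using down_trans[OF wc cc'] by simp
      obtain m where "e m = c'" using esurj[OF c'Tp] by blast
      then have "w \<in> Fam n h e (Suc m)" using in_Fam[of m "Suc m" w] wc' by simp
      then show ?thesis by blast
    qed
  qed
qed


lemma smap_top: "smap (simplex (length (e l) - 1)) (Fam n h e (Suc l)) (act (e l))"
  unfolding smap_def
proof (intro ballI conjI allI impI)
  fix s assume s: "s \<in> simplex (length (e l) - 1)"
  then have "act (e l) s \<in> down (e l)" unfolding down_def by blast
  then show "act (e l) s \<in> Fam n h e (Suc l)" unfolding Fam_Suc by blast
  show "length (act (e l) s) = length s" by simp
  fix \<theta> assume "valid_op s \<theta>"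
  then show "act (e l) (act s \<theta>) = act (act (e l) s) \<theta>" using act_act by simp
qed

lemma smap_horn: "smap (horn (length (e l) - 1) (kk h (e l))) (Fam n h e l) (act (e l))"
  unfolding smap_def
proof (intro ballI conjI allI impI)
  fix s assume s: "s \<in> horn (length (e l) - 1) (kk h (e l))"
  note K = kk_props[OF eA[of l]]
  obtain j where j: "s \<in> simplex (length (e l) - 1)" "j \<le> length (e l) - 1" "j \<noteq> kk h (e l)" "j \<notin> set s"
    using s unfolding horn_iff by blast
  have lt: "1 < length (e l)" using K(1,2) by simp
  have jl: "j < length (e l)" using j(2) lt by simp
  have "act (e l) s \<in> down (dl j (e l))" using face_down[OF lt j(1) jl j(4)] .
  then show "act (e l) s \<in> Fam n h e l" using ssubset_closed[OF Fam_ss horn_face[OF jl j(3)]] by blast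
  show "length (act (e l) s) = length s" by simp
  fix \<theta> assume "valid_op s \<theta>"
  then show "act (e l) (act s \<theta>) = act (act (e l) s) \<theta>" using act_act by simp
qed

lemma pushout: "pushout_incl (Fam n h e l) (horn (length (e l) - 1) (kk h (e l)))
   (simplex (length (e l) - 1)) (Fam n h e (Suc l)) (act (e l)) (act (e l))"
  unfolding pushout_incl_def
proof (intro conjI ballI)
  let ?t = "e l"
  let ?k = "kk h ?t"
  let ?p = "length ?t - 1"
  note K = kk_props[OF eA[of l]]
  have ndt: "nd ?t" using eA[of l] unfolding Tp_def by auto
  have lt: "length ?t = Suc ?p" using K(2) by simp
  have Rn: "?t ! (?k - 1) \<noteq> ?t ! Suc ?k" using K(5) unfolding R_def by simp
  have kp: "?k < ?p" using K(2) by simp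
  show "horn ?p ?k \<subseteq> simplex ?p" using horn_iff by blast
  show "Fam n h e l \<subseteq> Fam n h e (Suc l)" unfolding Fam_Suc by blast
  show "Fam n h e (Suc l) = Fam n h e l \<union> act ?t ` simplex ?p" unfolding Fam_Suc down_def ..
  show "inj_on (act ?t) (simplex ?p - horn ?p ?k)" using sh_inj[OF ndt lt K(1) kp Rn] .
  show "act ?t ` (simplex ?p - horn ?p ?k) \<inter> Fam n h e l = {}" using disj by blast
qed simp

lemma len_mono: "length (e l) \<le> length (e (Suc l))"
proof (rule ccontr)
  assume "\<not> length (e l) \<le> length (e (Suc l))"
  then have "idx h (e (Suc l)) < idx h (e l)" using idx_lt_len by simp
  then show False using emono[of l "Suc l"] by simp
qed

end

theorem lemma6p4:
  fixes n i :: nat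
  assumes "0 < i" and "i < n"
  shows "inner_expansion n n (thick_horn n i \<union> simplex n) (thick n)"
proof -
  have hn: "0 < i" "i < n" using assms .
  have Tsub: "Tp n i \<subseteq> thick n" unfolding Tp_def by blast
  from enum[OF Tp_infinite[OF hn] Tsub, of i] obtain e :: "nat \<Rightarrow> nat list" where
    E0: "(\<forall>l. e l \<in> Tp n i) \<and> inj e \<and> (\<forall>t\<in>Tp n i. \<exists>l. e l = t) \<and>
     (\<forall>l l'. l < l' \<longrightarrow> idx i (e l) \<le> idx i (e l'))" by (rule exE)
  have E: "\<forall>l. e l \<in> Tp n i" "inj e" "\<forall>t\<in>Tp n i. \<exists>l. e l = t"
    "\<forall>l l'. l < l' \<longrightarrow> idx i (e l) \<le> idx i (e l')" using E0 by simp_all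
  interpret ectx n i e
  proof
    show "0 < i" "i < n" using hn .
    show "\<And>l. e l \<in> Tp n i" using E(1) by blast
    show "inj e" using E(2) .
    show "\<And>t. t \<in> Tp n i \<Longrightarrow> \<exists>l. e l = t" using E(3) by blast
    show "\<And>l l'. l < l' \<Longrightarrow> idx i (e l) \<le> idx i (e l')" using E(4) by blast
  qed
  have thick_ss: "ssubset n (thick n)" unfolding ssubset_def
  proof (intro conjI ballI allI impI)
    fix s \<theta> assume "s \<in> thick n" "valid_op s \<theta>"
    then show "act s \<theta> \<in> thick n" using act_ne[of s \<theta>] set_act[of s \<theta>] unfolding thick_def by auto
  qed simp
  have Ssub: "thick_horn n i \<union> simplex n \<subseteq> thick n"
  proof
    fix w assume "w \<in> thick_horn n i \<union> simplex n"
    then show "w \<in> thick n" by (auto simp: th_iff simplex_def)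
  qed
  have main: "\<exists>(L::enat) (F::nat \<Rightarrow> nat list set) (ns::nat \<Rightarrow> nat) (iss::nat \<Rightarrow> nat)
        (xs::nat \<Rightarrow> nat list \<Rightarrow> nat list) (ys::nat \<Rightarrow> nat list \<Rightarrow> nat list).
       F 0 = thick_horn n i \<union> simplex n \<and>
       thick n = (\<Union>k\<in>{k. enat k \<le> L}. F k) \<and>
       (\<forall>k. enat k \<le> L \<longrightarrow> ssubset n (F k) \<and> F k \<subseteq> thick n) \<and>
       (\<forall>l. enat l < L \<longrightarrow>
          n \<le> ns l \<and> 0 < iss l \<and> iss l < ns l \<and>
          (enat (Suc l) < L \<longrightarrow> ns l \<le> ns (Suc l)) \<and>
          smap (simplex (ns l)) (F (Suc l)) (xs l) \<and>
          smap (horn (ns l) (iss l)) (F l) (ys l) \<and>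
          pushout_incl (F l) (horn (ns l) (iss l)) (simplex (ns l)) (F (Suc l)) (ys l) (xs l))"
    apply (rule exI[where x="\<infinity>"])
    apply (rule exI[where x="Fam n i e"])
    apply (rule exI[where x="\<lambda>l. length (e l) - 1"])
    apply (rule exI[where x="\<lambda>l. kk i (e l)"])
    apply (rule exI[where x="\<lambda>l. act (e l)"])
    apply (rule exI[where x="\<lambda>l. act (e l)"])
  proof (intro conjI allI impI)
    show "Fam n i e 0 = thick_horn n i \<union> simplex n" unfolding Fam_def SS_def by simp
    show "thick n = (\<Union>k\<in>{k. enat k \<le> \<infinity>}. Fam n i e k)"
    proof
      show "thick n \<subseteq> (\<Union>k\<in>{k. enat k \<le> \<infinity>}. Fam n i e k)"
      proof
        fix w assume "w \<in> thick n"
        then obtain l where "w \<in> Fam n i e l" using cover by blast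
        then show "w \<in> (\<Union>k\<in>{k. enat k \<le> \<infinity>}. Fam n i e k)" by auto
      qed
      show "(\<Union>k\<in>{k. enat k \<le> \<infinity>}. Fam n i e k) \<subseteq> thick n"
      proof
        fix w assume "w \<in> (\<Union>k\<in>{k. enat k \<le> \<infinity>}. Fam n i e k)"
        then obtain k where "w \<in> Fam n i e k" by blast
        then show "w \<in> thick n" using Fam_sub by blast
      qed
    qed
    fix k show "ssubset n (Fam n i e k)" by (rule Fam_ss)
    show "Fam n i e k \<subseteq> thick n" by (rule Fam_sub)
  next
    fix l
    note K = kk_props[OF eA[of l]]
    show "n \<le> length (e l) - 1" using top_len[OF hn eA[of l]] by simp
    show "0 < kk i (e l)" using K(1) .
    show "kk i (e l) < length (e l) - 1" using K(2) by simp
    show "length (e l) - 1 \<le> length (e (Suc l)) - 1" using len_mono[of l] by simp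
    show "smap (simplex (length (e l) - 1)) (Fam n i e (Suc l)) (act (e l))" by (rule smap_top)
    show "smap (horn (length (e l) - 1) (kk i (e l))) (Fam n i e l) (act (e l))" by (rule smap_horn)
    show "pushout_incl (Fam n i e l) (horn (length (e l) - 1) (kk i (e l)))
      (simplex (length (e l) - 1)) (Fam n i e (Suc l)) (act (e l)) (act (e l))" by (rule pushout)
  qed
  show ?thesis unfolding inner_expansion_def
  proof (intro conjI)
    show "0 < n" using hn by simp
    show "ssubset n (thick_horn n i \<union> simplex n)" by (rule ssubset_S)
  qed (fact thick_ss Ssub main)+
qed

end
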